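(* Let $E$ and $F$ be disjoint finite sets, and let $S\subseteq 2^E$ and $T\subseteq 2^F$ be powerful sets. Define the direct sum $S\oplus T=\{X\cup Y : X\in S,\ Y\in T\}\subseteq 2^{E\cup F}$. Then $\mathcal{C}(S\oplus T)=\mathcal{C}(S)\cup\mathcal{C}(T)$.
   Context: For a finite set $E$, a set $S\subseteq 2^E$ is powerful if for every $X\subseteq E$ the number of members of $S$ that are subsets of $X$ is a power of $2$ (in particular $\emptyset\in S$). For a powerful set $S$, $\mathcal{C}(S)$ denotes the set of cocircuits of $S$, i.e. the minimal (under inclusion) nonempty members of $S$. *)

theory Defs
  imports Main
begin

definition powerful :: "'a set \<Rightarrow> 'a set set \<Rightarrow> bool" where
  "powerful E S \<longleftrightarrow> finite E \<and> S \<subseteq> Pow E \<and>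
     (\<forall>X. X \<subseteq> E \<longrightarrow> (\<exists>k::nat. card {A \<in> S. A \<subseteq> X} = 2 ^ k))"

definition cocircuits :: "'a set set \<Rightarrow> 'a set set" where
  "cocircuits S = {C \<in> S. C \<noteq> {} \<and> (\<forall>D \<in> S. D \<noteq> {} \<longrightarrow> D \<subseteq> C \<longrightarrow> D = C)}"

definition direct_sum :: "'a set set \<Rightarrow> 'a set set \<Rightarrow> 'a set set" where
  "direct_sum S T = {X \<union> Y | X Y. X \<in> S \<and> Y \<in> T}"

end

theory Submission
  imports Defs
begin

lemma pow_empty: assumes "powerful E S" shows "{} \<in> S"
proof -
  obtain k :: nat where k: "card {A \<in> S. A \<subseteq> {}} = 2 ^ k"
    using assms unfolding powerful_def by blast
  hence "{A \<in> S. A \<subseteq> {}} \<noteq> {}" by (metis card.empty power_not_zero zero_neq_numeral)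
  thus ?thesis by auto
qed

theorem theorem2:
  fixes E F :: "'a set" and S T :: "'a set set"
  assumes "finite E" and "finite F" and "E \<inter> F = {}"
    and "powerful E S" and "powerful F T"
  shows "cocircuits (direct_sum S T) = cocircuits S \<union> cocircuits T"
proof -
  have eS: "{} \<in> S" using pow_empty assms(4) .
  have eT: "{} \<in> T" using pow_empty assms(5) .
  have SE: "S \<subseteq> Pow E" using assms(4) unfolding powerful_def by blast
  have TF: "T \<subseteq> Pow F" using assms(5) unfolding powerful_def by blast
  have Ssub: "S \<subseteq> direct_sum S T" using eT unfolding direct_sum_def by blast
  have Tsub: "T \<subseteq> direct_sum S T" using eS unfolding direct_sum_def by blast
  show ?thesis
  proof
    show "cocircuits (direct_sum S T) \<subseteq> cocircuits S \<union> cocircuits T"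
    proof
      fix C assume C: "C \<in> cocircuits (direct_sum S T)"
      then obtain X Y where XY: "C = X \<union> Y" "X \<in> S" "Y \<in> T"
        unfolding cocircuits_def direct_sum_def by blast
      have ne: "C \<noteq> {}" and mn: "\<And>D. D \<in> direct_sum S T \<Longrightarrow> D \<noteq> {} \<Longrightarrow> D \<subseteq> C \<Longrightarrow> D = C"
        using C unfolding cocircuits_def by auto
      show "C \<in> cocircuits S \<union> cocircuits T"
      proof (cases "X = {}")
        case True
        hence "C = Y" using XY by simp
        hence "C \<in> cocircuits T" using XY ne mn Tsub unfolding cocircuits_def by blast
        thus ?thesis by blast
      next
        case False
        hence "X = C" using mn[of X] XY Ssub by blast
        hence "C \<in> cocircuits S" using XY ne mn Ssub unfolding cocircuits_def by blast
        thus ?thesis by blast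
      qed
    qed
  next
    show "cocircuits S \<union> cocircuits T \<subseteq> cocircuits (direct_sum S T)"
    proof
      fix C assume "C \<in> cocircuits S \<union> cocircuits T"
      thus "C \<in> cocircuits (direct_sum S T)"
      proof
        assume C: "C \<in> cocircuits S"
        have CE: "C \<subseteq> E" using C SE unfolding cocircuits_def by blast
        show ?thesis unfolding cocircuits_def
        proof (intro CollectI conjI ballI impI)
          show "C \<in> direct_sum S T" using C Ssub unfolding cocircuits_def by blast
          show "C \<noteq> {}" using C unfolding cocircuits_def by blast
          fix D assume D: "D \<in> direct_sum S T" "D \<noteq> {}" "D \<subseteq> C"
          then obtain X Y where XY: "D = X \<union> Y" "X \<in> S" "Y \<in> T"
            unfolding direct_sum_def by blast
          have "Y = {}" using XY D(3) CE TF assms(3) by blast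
          thus "D = C" using XY D C unfolding cocircuits_def by auto
        qed
      next
        assume C: "C \<in> cocircuits T"
        have CF: "C \<subseteq> F" using C TF unfolding cocircuits_def by blast
        show ?thesis unfolding cocircuits_def
        proof (intro CollectI conjI ballI impI)
          show "C \<in> direct_sum S T" using C Tsub unfolding cocircuits_def by blast
          show "C \<noteq> {}" using C unfolding cocircuits_def by blast
          fix D assume D: "D \<in> direct_sum S T" "D \<noteq> {}" "D \<subseteq> C"
          then obtain X Y where XY: "D = X \<union> Y" "X \<in> S" "Y \<in> T"
            unfolding direct_sum_def by blast
          have "X = {}" using XY D(3) CF SE assms(3) by blast
          thus "D = C" using XY D C unfolding cocircuits_def by auto
        qed
      qed
    qed
  qed
qed

end
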